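(* For every graph $G$ of order $n\geq 2$ with vertex connectivity $\kappa$, $\operatorname{th}_{\operatorname{H}}^*(G)\geq\left\lceil\frac{n+\kappa}{2}\right\rceil$. In particular, if $G$ is connected then $\operatorname{th}_{\operatorname{H}}^*(G)\geq\left\lceil\frac{n+1}{2}\right\rceil$.
   Context: All graphs are finite, simple and undirected; vertex connectivity follows the usual convention ($\kappa(K_n)=n-1$, $\kappa=0$ for disconnected graphs). Hopping color change rule: a blue vertex $v$ may force a white vertex $w$ to become blue if $v$ has not previously performed a force and every neighbor of $v$ is blue. For an initial blue set $B$, a chronological list of forces of $B$ is a sequence of such forces applied one at a time until no further force is possible; its underlying unordered set is a set of forces of $B$. $B$ is a hopping forcing set if some chronological list of forces of $B$ turns all vertices blue; $\operatorname{H}(G)$ is the minimum size of one. For a set of forces $\mathcal F$ of $B$, let $\mathcal F^{(0)}=B$ and for $t\geq1$ let $\mathcal F^{(t)}$ be the set of vertices $w\notin U_{t-1}:=\bigcup_{i=0}^{t-1}\mathcal F^{(i)}$ for which there is $(v\to w)\in\mathcal F$ with $v\in U_{t-1}$ and all neighbors of $v$ in $U_{t-1}$. $\operatorname{pt}_{\operatorname{H}}(G;\mathcal F)$ is the least $t$ with $\bigcup_{i=0}^t\mathcal F^{(i)}=V(G)$ ($\infty$ if none); $\operatorname{pt}_{\operatorname{H}}(G;B)$ is the minimum over sets of forces $\mathcal F$ of $B$ ($\infty$ if $B$ is not a hopping forcing set). $\operatorname{pt}_{\operatorname{H}}(G,k)=\min\{\operatorname{pt}_{\operatorname{H}}(G;B):|B|=k\}$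 and $\operatorname{th}_{\operatorname{H}}^*(G)=\min_{\operatorname{H}(G)\leq k<n}\{k\cdot\operatorname{pt}_{\operatorname{H}}(G,k)\}$, with the conventions $\min\emptyset=\infty$ and $k\cdot\infty=\infty$. *)

theory Defs
  imports Main "HOL-Library.Extended_Nat"
begin

definition simple_graph :: "'a set \<Rightarrow> ('a \<Rightarrow> 'a \<Rightarrow> bool) \<Rightarrow> bool" where
  "simple_graph V E \<longleftrightarrow> finite V \<and> (\<forall>u v. E u v \<longrightarrow> u \<in> V \<and> v \<in> V)
     \<and> (\<forall>u v. E u v \<longrightarrow> E v u) \<and> (\<forall>v. \<not> E v v)"

definition nbrs :: "'a set \<Rightarrow> ('a \<Rightarrow> 'a \<Rightarrow> bool) \<Rightarrow> 'a \<Rightarrow> 'a set" where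
  "nbrs V E v = {u \<in> V. E v u}"

definition connected_on :: "'a set \<Rightarrow> ('a \<Rightarrow> 'a \<Rightarrow> bool) \<Rightarrow> 'a set \<Rightarrow> bool" where
  "connected_on V E W \<longleftrightarrow>
     (\<forall>u\<in>W. \<forall>v\<in>W. (\<lambda>x y. x \<in> W \<and> y \<in> W \<and> E x y)\<^sup>*\<^sup>* u v)"

(* vertex connectivity: least number of vertices whose removal leaves a disconnected graph
   or at most one vertex (so kappa(K_n) = n-1, kappa = 0 for disconnected graphs) *)
definition vertex_connectivity :: "'a set \<Rightarrow> ('a \<Rightarrow> 'a \<Rightarrow> bool) \<Rightarrow> nat" where
  "vertex_connectivity V E =
     Min {card S | S. S \<subseteq> V \<and> (card (V - S) \<le> 1 \<or> \<not> connected_on V E (V - S))}"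

(* v may hop-force w in state (blue set S, set U of vertices that already forced) *)
definition can_force :: "'a set \<Rightarrow> ('a \<Rightarrow> 'a \<Rightarrow> bool) \<Rightarrow> 'a set \<Rightarrow> 'a set \<Rightarrow> 'a \<Rightarrow> 'a \<Rightarrow> bool" where
  "can_force V E S U v w \<longleftrightarrow> v \<in> S \<and> v \<notin> U \<and> w \<in> V \<and> w \<notin> S \<and> nbrs V E v \<subseteq> S"

fun valid_forces :: "'a set \<Rightarrow> ('a \<Rightarrow> 'a \<Rightarrow> bool) \<Rightarrow> 'a set \<Rightarrow> 'a set \<Rightarrow> ('a \<times> 'a) list \<Rightarrow> bool" where
  "valid_forces V E S U [] = True"
| "valid_forces V E S U ((v, w) # fs) =
     (can_force V E S U v w \<and> valid_forces V E (insert w S) (insert v U) fs)"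

definition blue_after :: "'a set \<Rightarrow> ('a \<times> 'a) list \<Rightarrow> 'a set" where
  "blue_after B fs = B \<union> snd ` set fs"

definition used_after :: "('a \<times> 'a) list \<Rightarrow> 'a set" where
  "used_after fs = fst ` set fs"

definition chron_list :: "'a set \<Rightarrow> ('a \<Rightarrow> 'a \<Rightarrow> bool) \<Rightarrow> 'a set \<Rightarrow> ('a \<times> 'a) list \<Rightarrow> bool" where
  "chron_list V E B fs \<longleftrightarrow> B \<subseteq> V \<and> valid_forces V E B {} fs
     \<and> \<not> (\<exists>v w. can_force V E (blue_after B fs) (used_after fs) v w)"

definition sets_of_forces :: "'a set \<Rightarrow> ('a \<Rightarrow> 'a \<Rightarrow> bool) \<Rightarrow> 'a set \<Rightarrow> ('a \<times> 'a) set set" where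
  "sets_of_forces V E B = {set fs | fs. chron_list V E B fs}"

definition hopping_forcing_set :: "'a set \<Rightarrow> ('a \<Rightarrow> 'a \<Rightarrow> bool) \<Rightarrow> 'a set \<Rightarrow> bool" where
  "hopping_forcing_set V E B \<longleftrightarrow> (\<exists>fs. chron_list V E B fs \<and> blue_after B fs = V)"

definition hopping_number :: "'a set \<Rightarrow> ('a \<Rightarrow> 'a \<Rightarrow> bool) \<Rightarrow> nat" where
  "hopping_number V E = Min {card B | B. hopping_forcing_set V E B}"

fun blue_by_time :: "'a set \<Rightarrow> ('a \<Rightarrow> 'a \<Rightarrow> bool) \<Rightarrow> 'a set \<Rightarrow> ('a \<times> 'a) set \<Rightarrow> nat \<Rightarrow> 'a set" where
  "blue_by_time V E B F 0 = B"
| "blue_by_time V E B F (Suc t) =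
     blue_by_time V E B F t \<union>
     {w. w \<notin> blue_by_time V E B F t \<and>
         (\<exists>v. (v, w) \<in> F \<and> v \<in> blue_by_time V E B F t \<and>
              nbrs V E v \<subseteq> blue_by_time V E B F t)}"

definition pt_forces :: "'a set \<Rightarrow> ('a \<Rightarrow> 'a \<Rightarrow> bool) \<Rightarrow> 'a set \<Rightarrow> ('a \<times> 'a) set \<Rightarrow> enat" where
  "pt_forces V E B F =
     (if \<exists>t. blue_by_time V E B F t = V then enat (LEAST t. blue_by_time V E B F t = V) else \<infinity>)"

definition pt_set :: "'a set \<Rightarrow> ('a \<Rightarrow> 'a \<Rightarrow> bool) \<Rightarrow> 'a set \<Rightarrow> enat" where
  "pt_set V E B =
     (if hopping_forcing_set V E B then (INF F \<in> sets_of_forces V E B. pt_forces V E B F) else \<infinity>)"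

(* minimum over the empty set is \<infinity> (Inf {} = \<infinity> in enat) *)
definition pt_k :: "'a set \<Rightarrow> ('a \<Rightarrow> 'a \<Rightarrow> bool) \<Rightarrow> nat \<Rightarrow> enat" where
  "pt_k V E k = (INF B \<in> {B. B \<subseteq> V \<and> card B = k}. pt_set V E B)"

definition th_star :: "'a set \<Rightarrow> ('a \<Rightarrow> 'a \<Rightarrow> bool) \<Rightarrow> enat" where
  "th_star V E = (INF k \<in> {k. hopping_number V E \<le> k \<and> k < card V}.
      (if pt_k V E k = \<infinity> then \<infinity> else enat k * pt_k V E k))"

end

theory Submission imports Defs Complex_Main begin

lemma enat_INF_attained:
  assumes "(INF x\<in>A. f x) = enat p"
  shows "\<exists>x\<in>A. f x = enat p"
proof -
  have ne: "f ` A \<noteq> {}" using assms by (auto simp: Inf_enat_def)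
  have "(INF x\<in>A. f x) = (LEAST y. y \<in> f ` A)" using ne by (simp add: Inf_enat_def)
  moreover have "(LEAST y. y \<in> f ` A) \<in> f ` A" using ne by (metis LeastI ex_in_conv)
  ultimately show ?thesis using assms by force
qed

lemma valid_forces_props:
  "valid_forces V E S U fs \<Longrightarrow> distinct (map fst fs) \<and> fst ` set fs \<inter> U = {}
     \<and> distinct (map snd fs) \<and> snd ` set fs \<inter> S = {}
     \<and> (\<forall>p\<in>set fs. snd p \<in> V)"
proof (induction fs arbitrary: S U)
  case Nil then show ?case by simp
next
  case (Cons a fs)
  obtain v w where a: "a = (v,w)" by force
  from Cons.prems a have cf: "can_force V E S U v w"
    and vf: "valid_forces V E (insert w S) (insert v U) fs" by auto
  from Cons.IH[OF vf] cf show ?case by (auto simp: a can_force_def)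
qed

lemma bbt_sub: "blue_by_time V E B F t \<subseteq> B \<union> snd ` F"
  by (induction t) (auto intro: rev_image_eqI)

lemma bbt_mono: "blue_by_time V E B F t \<subseteq> blue_by_time V E B F (Suc t)"
  by auto

lemma bbt_B: "B \<subseteq> blue_by_time V E B F t"
  by (induction t) auto

lemma bbt_back: "w \<in> blue_by_time V E B F t \<Longrightarrow> w \<notin> B \<Longrightarrow>
   \<exists>v. (v,w) \<in> F \<and> v \<in> blue_by_time V E B F t"
proof (induction t)
  case 0 then show ?case by simp
next
  case (Suc t)
  then show ?case by auto
qed

lemma bbt_step: "blue_by_time V E B F (Suc t) \<subseteq> blue_by_time V E B F t \<union>
   snd ` {p\<in>F. fst p \<in> blue_by_time V E B F t \<and> snd p \<notin> blue_by_time V E B F t}"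
  by (auto simp: image_iff)

lemma bbt_card:
  assumes fin: "finite F" "finite B" and ifst: "inj_on fst F" and isnd: "inj_on snd F"
  shows "card (blue_by_time V E B F t) \<le> card B * (t+1)"
proof (induction t)
  case 0 then show ?case by simp
next
  case (Suc t)
  define U where "U = blue_by_time V E B F t"
  have finU: "finite U" unfolding U_def using bbt_sub[of V E B F t] fin
    by (meson finite_Un finite_imageI finite_subset)
  define A where "A = {p\<in>F. fst p \<in> U \<and> snd p \<notin> U}"
  define A2 where "A2 = {p\<in>F. snd p \<in> U - B}"
  define Q where "Q = {p\<in>F. fst p \<in> U}"
  have A2Q: "A2 \<subseteq> Q"
  proof
    fix p assume p: "p \<in> A2"
    then obtain v where v: "(v, snd p) \<in> F" "v \<in> U"
      using bbt_back[of "snd p" V E B F t] unfolding A2_def U_def by auto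
    have "p = (v, snd p)" using isnd p v(1) unfolding A2_def
      by (metis (mono_tags, lifting) inj_onD mem_Collect_eq snd_conv)
    then show "p \<in> Q" using p v unfolding Q_def A2_def by (metis (lifting) fst_conv mem_Collect_eq)
  qed
  have "A \<subseteq> Q" unfolding A_def Q_def by auto
  have disj: "A \<inter> A2 = {}" unfolding A_def A2_def by auto
  have finQ: "finite Q" unfolding Q_def using fin by auto
  have "card Q \<le> card U"
  proof -
    have "card Q = card (fst ` Q)" using ifst by (metis (no_types, lifting) Q_def card_image inj_on_subset mem_Collect_eq subsetI)
    also have "\<dots> \<le> card U" by (rule card_mono[OF finU]) (auto simp: Q_def)
    finally show ?thesis .
  qed
  moreover have "card A + card A2 \<le> card Q"
  proof -
    have "card (A \<union> A2) = card A + card A2"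
      by (rule card_Un_disjoint) (use finQ \<open>A \<subseteq> Q\<close> A2Q disj in \<open>auto intro: finite_subset\<close>)
    moreover have "card (A \<union> A2) \<le> card Q" using finQ \<open>A \<subseteq> Q\<close> A2Q by (intro card_mono) auto
    ultimately show ?thesis by simp
  qed
  moreover have "card A2 = card (U - B)"
  proof -
    have "snd ` A2 = U - B" unfolding A2_def U_def using bbt_sub[of V E B F t] by auto
    moreover have "inj_on snd A2" using isnd by (rule inj_on_subset) (auto simp: A2_def)
    ultimately show ?thesis by (metis card_image)
  qed
  moreover have "card (U - B) = card U - card B"
    using bbt_B[of B V E F t] finU unfolding U_def by (simp add: card_Diff_subset fin(2))
  moreover have "card B \<le> card U" using bbt_B[of B V E F t] finU unfolding U_def by (simp add: card_mono)
  ultimately have cA: "card A \<le> card B" by linarith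
  have "card (blue_by_time V E B F (Suc t)) \<le> card (U \<union> snd ` A)"
    using bbt_step[of V E B F t] finU fin unfolding U_def A_def
    by (intro card_mono) auto
  also have "\<dots> \<le> card U + card (snd ` A)" by (rule card_Un_le)
  also have "\<dots> \<le> card U + card A"
    using fin by (simp add: A_def card_image_le)
  finally show ?case using cA Suc.IH unfolding U_def by simp
qed

lemma kappa_le:
  assumes "finite V" "S \<subseteq> V" "card (V - S) \<le> 1 \<or> \<not> connected_on V E (V - S)"
  shows "vertex_connectivity V E \<le> card S"
  unfolding vertex_connectivity_def
proof (rule Min_le)
  show "finite {card S |S. S \<subseteq> V \<and> (card (V - S) \<le> 1 \<or> \<not> connected_on V E (V - S))}"
    by (rule finite_subset[of _ "card ` Pow V"]) (use assms(1) in auto)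
qed (use assms in auto)

lemma stuck:
  assumes "\<And>x y. R\<^sup>*\<^sup>* x y \<Longrightarrow> x \<in> X \<Longrightarrow> y \<in> X" "x \<in> X" "y \<notin> X"
  shows "\<not> R\<^sup>*\<^sup>* x y" using assms by blast

lemma closed_reach:
  assumes "R\<^sup>*\<^sup>* x y" "x \<in> X" "\<And>a b. R a b \<Longrightarrow> a \<in> X \<Longrightarrow> b \<in> X"
  shows "y \<in> X"
  using assms(1,2) by (induction rule: rtranclp_induct) (use assms(3) in auto)

lemma key:
  assumes sg: "simple_graph V E" and cl: "chron_list V E B fs" and lt: "card B < card V"
    and full: "blue_by_time V E B (set fs) p = V"
  shows "card V + vertex_connectivity V E \<le> 2 * (card B * p)"
proof -
  define F where "F = set fs"
  define U where "U t = blue_by_time V E B F t" for t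
  have finV: "finite V" using sg by (simp add: simple_graph_def)
  have BV: "B \<subseteq> V" and vf: "valid_forces V E B {} fs" using cl by (auto simp: chron_list_def)
  have finB: "finite B" using BV finV finite_subset by blast
  have finF: "finite F" by (simp add: F_def)
  from valid_forces_props[OF vf]
  have ifst: "inj_on fst F" and isnd: "inj_on snd F" and dB: "snd ` F \<inter> B = {}"
    by (auto simp: F_def distinct_map)
  have fullU: "U p = V" using full by (simp add: U_def F_def)
  have p0: "p \<noteq> 0"
  proof
    assume "p = 0" then have "B = V" using fullU by (simp add: U_def)
    then show False using lt by simp
  qed
  have "U 1 \<noteq> B"
  proof
    assume h: "U 1 = B"
    have "U t = B" for t
    proof (induction t)
      case 0 then show ?case by (simp add: U_def)
    next
      case (Suc t) then show ?case using h by (simp add: U_def)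
    qed
    then show False using fullU lt by simp
  qed
  then obtain w0 where "w0 \<in> U 1" "w0 \<notin> B" using bbt_B[of B V E F 1] unfolding U_def by blast
  then obtain v0 where v0: "(v0, w0) \<in> F" "v0 \<in> B" "nbrs V E v0 \<subseteq> B"
    by (auto simp: U_def)
  have k1: "vertex_connectivity V E + 1 \<le> card B"
  proof -
    define S where "S = nbrs V E v0"
    have v0S: "v0 \<notin> S" using sg by (simp add: S_def nbrs_def simple_graph_def)
    have SB: "S \<subseteq> B - {v0}" using v0 v0S S_def by auto
    have cS: "card S + 1 \<le> card B"
    proof -
      have "card S \<le> card (B - {v0})" using SB finB by (intro card_mono) auto
      moreover have "card B \<ge> 1" using v0(2) finB card_0_eq by fastforce
      ultimately show ?thesis using v0(2) finB by (simp add: card_Diff_singleton)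
    qed
    have "card (V - S) \<le> 1 \<or> \<not> connected_on V E (V - S)"
    proof (cases "card (V - S) \<le> 1")
      case True then show ?thesis by simp
    next
      case False
      then obtain u where u: "u \<in> V - S" "u \<noteq> v0"
      proof -
        have "\<not> V - S \<subseteq> {v0}"
        proof
          assume "V - S \<subseteq> {v0}"
          then have "card (V - S) \<le> card {v0}" by (intro card_mono) auto
          then show False using False by simp
        qed
        then show ?thesis using that by blast
      qed
      have v0VS: "v0 \<in> V - S" using v0 BV v0S by auto
      have "\<not> (\<lambda>x y. x \<in> V - S \<and> y \<in> V - S \<and> E x y)\<^sup>*\<^sup>* v0 u"
      proof
        assume "(\<lambda>x y. x \<in> V - S \<and> y \<in> V - S \<and> E x y)\<^sup>*\<^sup>* v0 u"
        then have "u \<in> {v0}"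
          by (rule closed_reach) (auto simp: S_def nbrs_def)
        then show False using u by simp
      qed
      then have "\<not> connected_on V E (V - S)" using u v0VS unfolding connected_on_def by blast
      then show ?thesis by blast
    qed
    then have "vertex_connectivity V E \<le> card S"
      using kappa_le[OF finV] SB BV by blast
    then show ?thesis using cS by simp
  qed
  show ?thesis
  proof (cases "p = 1")
    case False
    then have p2: "p \<ge> 2" using p0 by simp
    have "card V \<le> card B * (p + 1)"
      using bbt_card[OF finF finB ifst isnd, of V E p] fullU by (simp add: U_def)
    moreover have "card B * (p + 2) \<le> card B * (2 * p)" using p2 by (intro mult_le_mono2) simp
    ultimately show ?thesis using k1 by (simp add: algebra_simps)
  next
    case True
    define W where "W = V - B"
    define P where "P = {q\<in>F. snd q \<in> W}"
    define X where "X = fst ` P"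
    have Pprop: "fst q \<in> B \<and> nbrs V E (fst q) \<subseteq> B" if q: "q \<in> P" for q
    proof -
      have "snd q \<in> U 1" "snd q \<notin> B" using q fullU True by (auto simp: P_def W_def)
      then obtain v where v: "(v, snd q) \<in> F" "v \<in> B" "nbrs V E v \<subseteq> B"
        by (auto simp: U_def)
      have "q = (v, snd q)" using isnd v(1) q unfolding P_def
        by (metis (mono_tags, lifting) inj_onD mem_Collect_eq snd_conv)
      then show ?thesis using v by (metis fst_conv)
    qed
    have XB: "X \<subseteq> B" and Xn: "\<And>x. x \<in> X \<Longrightarrow> nbrs V E x \<subseteq> B"
      using Pprop by (auto simp: X_def)
    have finP: "finite P" using finF by (simp add: P_def)
    have "card X = card P" unfolding X_def
      by (rule card_image, rule inj_on_subset[OF ifst]) (auto simp: P_def)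
    moreover have "card P = card W"
    proof -
      have "W \<subseteq> snd ` F" using bbt_sub[of V E B F p] fullU by (auto simp: W_def U_def)
      then have "snd ` P = W" by (auto simp: P_def image_iff)
      moreover have "inj_on snd P" by (rule inj_on_subset[OF isnd]) (auto simp: P_def)
      ultimately show ?thesis by (metis card_image)
    qed
    ultimately have cX: "card X = card V - card B"
      using BV finB by (simp add: W_def card_Diff_subset)
    have WX: "card X \<le> card B" using XB finB by (simp add: card_mono)
    define S where "S = B - X"
    have cS: "card S = card B - card X" using XB finB unfolding S_def by (meson card_Diff_subset finite_subset)
    have VS: "V - S = X \<union> W" using XB BV by (auto simp: S_def W_def)
    have "\<not> V \<subseteq> B"
    proof
      assume "V \<subseteq> B" then have "card V \<le> card B" using finB by (simp add: card_mono)
      then show False using lt by simp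
    qed
    then obtain w1 where w1: "w1 \<in> W" unfolding W_def by blast
    have "X \<noteq> {}" using cX lt by auto
    then obtain x1 where x1: "x1 \<in> X" by blast
    have "\<not> connected_on V E (V - S)"
    proof
      assume "connected_on V E (V - S)"
      then have "(\<lambda>x y. x \<in> V - S \<and> y \<in> V - S \<and> E x y)\<^sup>*\<^sup>* x1 w1"
      proof -
        have "x1 \<in> V - S" "w1 \<in> V - S" using x1 w1 VS by auto
        then show ?thesis using \<open>connected_on V E (V - S)\<close> unfolding connected_on_def by blast
      qed
      then have "w1 \<in> X"
      proof (rule closed_reach)
        show "x1 \<in> X" by fact
        fix a b assume "(\<lambda>x y. x \<in> V - S \<and> y \<in> V - S \<and> E x y) a b" "a \<in> X"
        then have "b \<in> B" "b \<in> V - S" using Xn sg by (auto simp: nbrs_def simple_graph_def)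
        then show "b \<in> X" by (auto simp: S_def)
      qed
      then show False using XB w1 by (auto simp: W_def)
    qed
    then have "vertex_connectivity V E \<le> card S"
      using kappa_le[OF finV, of S E] BV by (auto simp: S_def)
    then show ?thesis using cS cX WX True by simp
  qed
qed

lemma ceil_half:
  assumes "a \<le> 2 * m"
  shows "nat \<lceil>real a / 2\<rceil> \<le> m"
proof -
  have "real a / 2 \<le> real m" using assms by simp
  then have "\<lceil>real a / 2\<rceil> \<le> int m" using ceiling_le[of "real a / 2" "int m"] by simp
  then show ?thesis by (simp only: nat_le_iff)
qed

lemma kappa_pos:
  assumes sg: "simple_graph V E" and n2: "card V \<ge> 2" and con: "connected_on V E V"
  shows "vertex_connectivity V E \<ge> 1"
proof -
  have finV: "finite V" using sg by (simp add: simple_graph_def)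
  let ?M = "{card S |S. S \<subseteq> V \<and> (card (V - S) \<le> 1 \<or> \<not> connected_on V E (V - S))}"
  have fin: "finite ?M"
    by (rule finite_subset[of _ "card ` Pow V"]) (use finV in auto)
  have ne: "?M \<noteq> {}" by auto
  have "Min ?M \<in> ?M" using Min_in[OF fin ne] .
  then obtain S where S: "S \<subseteq> V" "card (V - S) \<le> 1 \<or> \<not> connected_on V E (V - S)"
    "card S = vertex_connectivity V E" unfolding vertex_connectivity_def by auto
  show ?thesis
  proof (rule ccontr)
    assume "\<not> ?thesis"
    then have "card S = 0" using S(3) by simp
    then have "S = {}" using S(1) finV by (meson card_0_eq finite_subset)
    then show False using S(2) n2 con by simp
  qed
qed

theorem proposition4p8:
  fixes V :: "'a set" and E :: "'a \<Rightarrow> 'a \<Rightarrow> bool"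
  assumes "simple_graph V E" and "card V \<ge> 2"
  shows "th_star V E \<ge> enat (nat \<lceil>(real (card V) + real (vertex_connectivity V E)) / 2\<rceil>)
    \<and> (connected_on V E V \<longrightarrow> th_star V E \<ge> enat (nat \<lceil>(real (card V) + 1) / 2\<rceil>))"
proof -
  define c where "c = nat \<lceil>(real (card V) + real (vertex_connectivity V E)) / 2\<rceil>"
  have main: "enat c \<le> th_star V E"
    unfolding th_star_def
  proof (rule INF_greatest)
    fix k assume k: "k \<in> {k. hopping_number V E \<le> k \<and> k < card V}"
    show "enat c \<le> (if pt_k V E k = \<infinity> then \<infinity> else enat k * pt_k V E k)"
    proof (cases "pt_k V E k = \<infinity>")
      case True then show ?thesis by simp
    next
      case False
      then obtain p where p: "pt_k V E k = enat p" by auto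
      then obtain B where B: "B \<subseteq> V" "card B = k" and pB: "pt_set V E B = enat p"
        using enat_INF_attained[of "pt_set V E" "{B. B \<subseteq> V \<and> card B = k}" p]
        by (auto simp: pt_k_def)
      then have hf: "hopping_forcing_set V E B" by (auto simp: pt_set_def split: if_splits)
      then obtain F where F: "F \<in> sets_of_forces V E B" "pt_forces V E B F = enat p"
        using pB enat_INF_attained[of "pt_forces V E B" "sets_of_forces V E B" p]
        by (auto simp: pt_set_def)
      then obtain fs where fs: "chron_list V E B fs" "F = set fs" by (auto simp: sets_of_forces_def)
      from F(2) have ex: "\<exists>t. blue_by_time V E B F t = V"
        and pl: "p = (LEAST t. blue_by_time V E B F t = V)"
        by (auto simp: pt_forces_def split: if_splits)
      have full: "blue_by_time V E B (set fs) p = V"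
        using LeastI_ex[OF ex] pl fs(2) by simp
      have "card V + vertex_connectivity V E \<le> 2 * (card B * p)"
        by (rule key[OF assms(1) fs(1) _ full]) (use B k in auto)
      then have "c \<le> k * p" unfolding c_def using B(2) ceil_half
        by (metis of_nat_add)
      then show ?thesis using p False by simp
    qed
  qed
  moreover have "connected_on V E V \<longrightarrow> enat (nat \<lceil>(real (card V) + 1) / 2\<rceil>) \<le> th_star V E"
  proof
    assume "connected_on V E V"
    then have "vertex_connectivity V E \<ge> 1" using kappa_pos assms by blast
    then have "nat \<lceil>(real (card V) + 1) / 2\<rceil> \<le> c" unfolding c_def
      by (intro nat_mono ceiling_mono) simp
    then show "enat (nat \<lceil>(real (card V) + 1) / 2\<rceil>) \<le> th_star V E" using main
      by (meson enat_ord_simps(1) order_trans)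
  qed
  ultimately show ?thesis unfolding c_def by simp
qed

end
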